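(* Let $X,Y,\tilde X$ be spaces with $X$ and $\tilde X$ compact Hausdorff, and let $k\colon\tilde X\to X$ be a surjective map. Then the homomorphism $\langle Y^k\rangle\colon\langle Y^X\rangle\to\langle Y^{\tilde X}\rangle$ satisfies $\langle Y^X\rangle^{(s)}=\langle Y^k\rangle^{-1}\big(\langle Y^{\tilde X}\rangle^{(s)}\big)$ for every $s\ge0$.
   Context: Spaces and maps are based. For a set $W$, $\langle W\rangle$ is the free abelian group with basis $\{\langle w\rangle\}$, and a function $f$ induces $\langle f\rangle$. $Y^X$ is the set of based maps $X\to Y$; $Y^k\colon Y^X\to Y^{\tilde X}$, $d\mapsto d\circ k$. For $R\subseteq X$ containing the basepoint, $V\mapsto V|_R$ is the homomorphism $\langle Y^X\rangle\to\langle Y^R\rangle$ induced by restriction. $\mathcal F_n(X)$ is the set of finite subsets $R\subseteq X$ containing the basepoint with $|R|\le n+1$, and $\langle Y^X\rangle^{(s)}=\{V\in\langle Y^X\rangle: V|_R=0\text{ for all }R\in\mathcal F_{s-1}(X)\}$ (similarly for $\tilde X$). *)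

theory Defs
  imports "HOL-Analysis.Analysis"
begin

text \<open>Free abelian group on a set W: finitely supported integer-valued functions
  supported in W.  The basis element for w is the indicator of w.\<close>
definition free_ab :: "'w set \<Rightarrow> ('w \<Rightarrow> int) set" where
  "free_ab W = {c. finite {w. c w \<noteq> 0} \<and> (\<forall>w. c w \<noteq> 0 \<longrightarrow> w \<in> W)}"

definition induced :: "('w \<Rightarrow> 'v) \<Rightarrow> ('w \<Rightarrow> int) \<Rightarrow> ('v \<Rightarrow> int)" where
  "induced f c = (\<lambda>v. \<Sum>w\<in>{w. c w \<noteq> 0 \<and> f w = v}. c w)"

definition based_maps :: "'a topology \<Rightarrow> 'a \<Rightarrow> 'b topology \<Rightarrow> 'b \<Rightarrow> ('a \<Rightarrow> 'b) set" where
  "based_maps X x0 Y y0 =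
     {d. continuous_map X Y d \<and> d x0 = y0 \<and> d \<in> extensional (topspace X)}"

definition finsubs :: "'a topology \<Rightarrow> 'a \<Rightarrow> nat \<Rightarrow> 'a set set" where
  "finsubs X x0 n = {R. finite R \<and> R \<subseteq> topspace X \<and> x0 \<in> R \<and> card R \<le> n + 1}"

text \<open>The filtration stage \<langle>Y^X\<rangle>^(s): elements all of whose restrictions to
  sets in F_(s-1)(X) vanish (F_(-1) is empty, i.e. finite R with card R \<le> s).\<close>
definition filt :: "'a topology \<Rightarrow> 'a \<Rightarrow> 'b topology \<Rightarrow> 'b \<Rightarrow> nat \<Rightarrow> (('a \<Rightarrow> 'b) \<Rightarrow> int) set" where
  "filt X x0 Y y0 s =
     {V \<in> free_ab (based_maps X x0 Y y0).
        \<forall>R. (s \<ge> 1 \<and> R \<in> finsubs X x0 (s - 1)) \<longrightarrow>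
            induced (\<lambda>d. restrict d R) V = (\<lambda>_. 0)}"

end

theory Submission
  imports Defs
begin

lemma induced_eq:
  assumes "finite S" "{w. c w \<noteq> 0} \<subseteq> S"
  shows "induced f c v = (\<Sum>w\<in>{w\<in>S. f w = v}. c w)"
  unfolding induced_def
  by (rule sum.mono_neutral_left) (use assms in \<open>auto intro: finite_subset\<close>)

lemma induced_supp: "{v. induced f c v \<noteq> 0} \<subseteq> f ` {w. c w \<noteq> 0}"
proof
  fix v assume "v \<in> {v. induced f c v \<noteq> 0}"
  then have "{w. c w \<noteq> 0 \<and> f w = v} \<noteq> {}" unfolding induced_def by force
  then show "v \<in> f ` {w. c w \<noteq> 0}" by blast
qed

lemma induced_comp:
  assumes "finite {w. c w \<noteq> 0}"
  shows "induced g (induced f c) = induced (g \<circ> f) c"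
proof
  fix v
  let ?S = "{w. c w \<noteq> 0}"
  have fin: "finite (f ` ?S)" using assms by simp
  have "induced g (induced f c) v = (\<Sum>u\<in>{u\<in>f ` ?S. g u = v}. induced f c u)"
    by (rule induced_eq[OF fin induced_supp])
  also have "\<dots> = (\<Sum>u\<in>{u\<in>f ` ?S. g u = v}. \<Sum>w\<in>{w\<in>{w\<in>?S. g (f w) = v}. f w = u}. c w)"
  proof (rule sum.cong[OF refl])
    fix u assume u: "u \<in> {u\<in>f ` ?S. g u = v}"
    have "induced f c u = (\<Sum>w\<in>{w\<in>?S. f w = u}. c w)" by (rule induced_eq[OF assms]) simp
    also have "{w\<in>?S. f w = u} = {w\<in>{w\<in>?S. g (f w) = v}. f w = u}" using u by auto
    finally show "induced f c u = (\<Sum>w\<in>{w\<in>{w\<in>?S. g (f w) = v}. f w = u}. c w)" .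
  qed
  also have "\<dots> = (\<Sum>w\<in>{w\<in>?S. g (f w) = v}. c w)"
    by (rule sum.group) (use assms in auto)
  also have "\<dots> = induced (g \<circ> f) c v" unfolding induced_def by (simp add: conj_commute)
  finally show "induced g (induced f c) v = induced (g \<circ> f) c v" .
qed

lemma induced_zero_inj:
  assumes "finite {w. c w \<noteq> 0}" "inj_on g {w. c w \<noteq> 0}" "induced g c = (\<lambda>_. 0)"
  shows "c = (\<lambda>_. 0)"
proof
  fix w show "c w = 0"
  proof (rule ccontr)
    assume h: "c w \<noteq> 0"
    have "{w'. c w' \<noteq> 0 \<and> g w' = g w} = {w}" using h assms(2) by (auto dest: inj_onD)
    then have "induced g c (g w) = c w" unfolding induced_def by simp
    with assms(3) h show False by simp
  qed
qed

lemma induced_zero[simp]: "induced g (\<lambda>_. 0) = (\<lambda>_. 0)"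
  unfolding induced_def by simp

theorem lemma3p2:
  fixes X :: "'a topology" and Xt :: "'t topology" and Y :: "'b topology"
    and x0 :: 'a and xt0 :: 't and y0 :: 'b and k :: "'t \<Rightarrow> 'a" and s :: nat
  assumes "x0 \<in> topspace X" and "xt0 \<in> topspace Xt" and "y0 \<in> topspace Y"
    and "compact_space X" and "Hausdorff_space X"
    and "compact_space Xt" and "Hausdorff_space Xt"
    and "continuous_map Xt X k" and "k xt0 = x0" and "k ` topspace Xt = topspace X"
  shows "filt X x0 Y y0 s =
    {V \<in> free_ab (based_maps X x0 Y y0).
       induced (\<lambda>d. restrict (d \<circ> k) (topspace Xt)) V \<in> filt Xt xt0 Y y0 s}"
proof -
  define K where "K = (\<lambda>d::'a\<Rightarrow>'b. restrict (d \<circ> k) (topspace Xt))"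
  have Kb: "K d \<in> based_maps Xt xt0 Y y0" if "d \<in> based_maps X x0 Y y0" for d
  proof -
    have c: "continuous_map X Y d" and d0: "d x0 = y0" using that unfolding based_maps_def by auto
    have "continuous_map Xt Y (d \<circ> k)" using c assms(8) by (rule continuous_map_compose[rotated])
    then have "continuous_map Xt Y (K d)"
      by (rule continuous_map_eq) (simp add: K_def)
    then show ?thesis using assms(2,9) d0 unfolding based_maps_def K_def by auto
  qed
  have KV: "induced K V \<in> free_ab (based_maps Xt xt0 Y y0)" if V: "V \<in> free_ab (based_maps X x0 Y y0)" for V
  proof -
    have f: "finite {w. V w \<noteq> 0}" and sub: "\<And>w. V w \<noteq> 0 \<Longrightarrow> w \<in> based_maps X x0 Y y0"
      using V unfolding free_ab_def by auto
    have "{v. induced K V v \<noteq> 0} \<subseteq> K ` {w. V w \<noteq> 0}" by (rule induced_supp)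
    then show ?thesis unfolding free_ab_def using f sub Kb
      by (auto intro: finite_subset)
  qed
  have key: "induced (\<lambda>e. restrict e Rt) (induced K V) =
      induced (\<lambda>e. restrict (e \<circ> k) Rt) (induced (\<lambda>d. restrict d (k ` Rt)) V)"
    if V: "V \<in> free_ab (based_maps X x0 Y y0)" and Rt: "Rt \<subseteq> topspace Xt" for V Rt
  proof -
    have f: "finite {w. V w \<noteq> 0}" using V unfolding free_ab_def by auto
    have "(\<lambda>e. restrict e Rt) \<circ> K = (\<lambda>e. restrict (e \<circ> k) Rt) \<circ> (\<lambda>d. restrict d (k ` Rt))"
      using Rt by (auto simp: K_def restrict_def fun_eq_iff)
    then show ?thesis using induced_comp[OF f] by metis
  qed
  show ?thesis
  proof (rule set_eqI, rule iffI)
    fix V assume "V \<in> filt X x0 Y y0 s"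
    then have V: "V \<in> free_ab (based_maps X x0 Y y0)"
      and z: "\<And>R. s \<ge> 1 \<Longrightarrow> R \<in> finsubs X x0 (s - 1) \<Longrightarrow> induced (\<lambda>d. restrict d R) V = (\<lambda>_. 0)"
      unfolding filt_def by auto
    have "induced K V \<in> filt Xt xt0 Y y0 s"
      unfolding filt_def
    proof (intro CollectI conjI allI impI)
      show "induced K V \<in> free_ab (based_maps Xt xt0 Y y0)" using KV[OF V] .
      fix Rt assume h: "1 \<le> s \<and> Rt \<in> finsubs Xt xt0 (s - 1)"
      then have Rt: "Rt \<subseteq> topspace Xt" "finite Rt" "xt0 \<in> Rt" "card Rt \<le> s - 1 + 1"
        unfolding finsubs_def by auto
      have a1: "k ` Rt \<subseteq> topspace X" using Rt(1) assms(10) by blast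
      have a2: "x0 \<in> k ` Rt" using Rt(3) assms(9) by (metis image_eqI)
      have a3: "card (k ` Rt) \<le> s - 1 + 1" using card_image_le[OF Rt(2), of k] Rt(4) by linarith
      have "k ` Rt \<in> finsubs X x0 (s - 1)"
        unfolding finsubs_def using a1 a2 a3 Rt(2) by blast
      then have "induced (\<lambda>d. restrict d (k ` Rt)) V = (\<lambda>_. 0)" using z h by auto
      then show "induced (\<lambda>e. restrict e Rt) (induced K V) = (\<lambda>_. 0)"
        using key[OF V Rt(1)] by simp
    qed
    then show "V \<in> {V \<in> free_ab (based_maps X x0 Y y0).
       induced (\<lambda>d. restrict (d \<circ> k) (topspace Xt)) V \<in> filt Xt xt0 Y y0 s}"
      using V unfolding K_def by simp
  next
    fix V assume "V \<in> {V \<in> free_ab (based_maps X x0 Y y0).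
       induced (\<lambda>d. restrict (d \<circ> k) (topspace Xt)) V \<in> filt Xt xt0 Y y0 s}"
    then have V: "V \<in> free_ab (based_maps X x0 Y y0)"
      and z: "\<And>R. s \<ge> 1 \<Longrightarrow> R \<in> finsubs Xt xt0 (s - 1) \<Longrightarrow> induced (\<lambda>d. restrict d R) (induced K V) = (\<lambda>_. 0)"
      unfolding filt_def K_def by auto
    have fV: "finite {w. V w \<noteq> 0}" using V unfolding free_ab_def by auto
    show "V \<in> filt X x0 Y y0 s"
      unfolding filt_def
    proof (intro CollectI conjI allI impI)
      show "V \<in> free_ab (based_maps X x0 Y y0)" using V .
      fix R assume h: "1 \<le> s \<and> R \<in> finsubs X x0 (s - 1)"
      then have R: "R \<subseteq> topspace X" "finite R" "x0 \<in> R" "card R \<le> s - 1 + 1"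
        unfolding finsubs_def by auto
      define f where "f x = (if x = x0 then xt0 else (SOME t. t \<in> topspace Xt \<and> k t = x))" for x
      have fx: "f x \<in> topspace Xt \<and> k (f x) = x" if "x \<in> topspace X" for x
      proof (cases "x = x0")
        case True then show ?thesis using assms(2,9) by (simp add: f_def)
      next
        case False
        have "x \<in> k ` topspace Xt" using that assms(10) by simp
        then obtain t where "t \<in> topspace Xt" "x = k t" by (rule imageE)
        then have ex: "\<exists>t. t \<in> topspace Xt \<and> k t = x" by blast
        have "f x = (SOME t. t \<in> topspace Xt \<and> k t = x)" using False by (simp add: f_def)
        then show ?thesis using someI_ex[OF ex] by simp
      qed
      define Rt where "Rt = f ` R"
      have Rt1: "Rt \<subseteq> topspace Xt" using fx R(1) unfolding Rt_def by auto
      have kf: "\<And>x. x \<in> R \<Longrightarrow> k (f x) = x" using fx R(1) by blast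
      have kRt: "k ` Rt = R"
      proof
        show "k ` Rt \<subseteq> R" unfolding Rt_def using kf by auto
        show "R \<subseteq> k ` Rt"
        proof
          fix x assume x: "x \<in> R"
          then have "f x \<in> Rt" unfolding Rt_def by blast
          then show "x \<in> k ` Rt" using kf[OF x] by (metis image_eqI)
        qed
      qed
      have f0: "f x0 = xt0" by (simp add: f_def)
      have "xt0 \<in> Rt" unfolding Rt_def using R(3) f0 by (metis image_eqI)
      moreover have "finite Rt" unfolding Rt_def using R(2) by simp
      moreover have "card Rt \<le> s - 1 + 1" unfolding Rt_def using card_image_le[OF R(2), of f] R(4) by linarith
      ultimately have "Rt \<in> finsubs Xt xt0 (s - 1)"
        unfolding finsubs_def using Rt1 by blast
      then have "induced (\<lambda>d. restrict d Rt) (induced K V) = (\<lambda>_. 0)" using z h by auto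
      then have z2: "induced (\<lambda>e. restrict (e \<circ> k) Rt) (induced (\<lambda>d. restrict d R) V) = (\<lambda>_. 0)"
        using key[OF V Rt1] kRt by simp
      have fin2: "finite {w. induced (\<lambda>d. restrict d R) V w \<noteq> 0}"
        using induced_supp[of "\<lambda>d. restrict d R" V] fV by (auto intro: finite_subset)
      have inj: "inj_on (\<lambda>e. restrict (e \<circ> k) Rt) {w. induced (\<lambda>d. restrict d R) V w \<noteq> 0}"
      proof (rule inj_onI)
        fix e1 e2
        assume e1: "e1 \<in> {w. induced (\<lambda>d. restrict d R) V w \<noteq> 0}"
          and e2: "e2 \<in> {w. induced (\<lambda>d. restrict d R) V w \<noteq> 0}"
          and eq: "restrict (e1 \<circ> k) Rt = restrict (e2 \<circ> k) Rt"
        have x1: "e1 \<in> extensional R" "e2 \<in> extensional R"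
          using e1 e2 induced_supp[of "\<lambda>d. restrict d R" V] by auto
        show "e1 = e2"
        proof (rule extensionalityI[OF x1])
          fix x assume "x \<in> R"
          then obtain t where t: "t \<in> Rt" "k t = x" using kRt by auto
          have "restrict (e1 \<circ> k) Rt t = restrict (e2 \<circ> k) Rt t" using eq by simp
          then show "e1 x = e2 x" using t by simp
        qed
      qed
      show "induced (\<lambda>d. restrict d R) V = (\<lambda>_. 0)"
        by (rule induced_zero_inj[OF fin2 inj z2])
    qed
  qed
qed

end
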